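(* Let $(X_m)_{m\in\mathbb{N}}$ be subspaces of $L_2(0,1)$ with $\dim X_m=m$, and let $Q_m$ denote the orthogonal projection in $L_2(0,1)$ (with its usual inner product) onto $X_m$. Assume there is a constant $L<\infty$ such that $$\inf\{\|x-z\|_0:\ z\in X_m\}\le \frac{L}{m}\|x\|_{1,0}\qquad\text{for all }x\in H_1(0,1),\ m\in\mathbb{N}.$$ Let $\sigma>0$, and define $Q_m^\sigma:=D_\sigma Q_m D_\sigma^{-1}$. Then each $Q_m^\sigma$ is an orthogonal projection with respect to $\langle\cdot,\cdot\rangle_\sigma$ onto the space $D_\sigma X_m$, and $$\inf\{\|x-z\|_\sigma:\ z\in D_\sigma X_m\}\le \frac{\sqrt2(1+\sigma)L}{m}\|x\|_{1,\sigma}\qquad\text{for all }x\in H_1^\sigma(0,1),\ m\in\mathbb{N}.$$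
   Context: All functions are real-valued. For $\sigma\ge0$, $L_2^\sigma(0,1)$ denotes $L_2(0,1)$ equipped with the inner product $\langle x,y\rangle_\sigma=\int_0^1 e^{-2\sigma t}x(t)y(t)\,dt$ and norm $\|x\|_\sigma^2=\int_0^1 e^{-2\sigma t}x(t)^2\,dt$ (so $\|\cdot\|_0$ is the usual $L_2$ norm). $H_1^\sigma(0,1)$ denotes the space of absolutely continuous $x$ with weak derivative $x'\in L_2(0,1)$, with norm $\|x\|_{1,\sigma}:=\frac12\left(\|x\|_\sigma^2+\|x'\|_\sigma^2\right)^{1/2}$; $H_1(0,1)=H_1^0(0,1)$. With $f_\sigma(t)=e^{\sigma t}$, $D_\sigma x:=f_\sigma x$ is the multiplication operator (an isometry from $L_2(0,1)$ onto $L_2^\sigma(0,1)$). *)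

theory Defs
  imports "HOL-Analysis.Analysis"
begin

text \<open>Representatives of elements of L2(0,1): Lebesgue measurable, square integrable on [0,1].\<close>
definition L2 :: "(real \<Rightarrow> real) set" where
  "L2 = {x. x \<in> borel_measurable (lebesgue_on {0..1}) \<and>
             integrable (lebesgue_on {0..1}) (\<lambda>t. (x t)\<^sup>2)}"

definition ip :: "real \<Rightarrow> (real \<Rightarrow> real) \<Rightarrow> (real \<Rightarrow> real) \<Rightarrow> real" where
  "ip \<sigma> x y = (LINT t|lebesgue_on {0..1}. exp (-2 * \<sigma> * t) * x t * y t)"

definition nrm :: "real \<Rightarrow> (real \<Rightarrow> real) \<Rightarrow> real" where
  "nrm \<sigma> x = sqrt (ip \<sigma> x x)"

text \<open>H1 membership: x is absolutely continuous on [0,1] with weak derivative x' in L2,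
  i.e. x is the indefinite integral of x'.\<close>
definition has_weak_deriv :: "(real \<Rightarrow> real) \<Rightarrow> (real \<Rightarrow> real) \<Rightarrow> bool" where
  "has_weak_deriv x x' \<longleftrightarrow> x' \<in> L2 \<and>
     (\<forall>t\<in>{0..1}. x t = x 0 + (LINT s|lebesgue_on {0..t}. x' s))"

definition nrm1 :: "real \<Rightarrow> (real \<Rightarrow> real) \<Rightarrow> (real \<Rightarrow> real) \<Rightarrow> real" where
  "nrm1 \<sigma> x x' = (1/2) * sqrt ((nrm \<sigma> x)\<^sup>2 + (nrm \<sigma> x')\<^sup>2)"

definition L2_subspace_dim :: "(real \<Rightarrow> real) set \<Rightarrow> nat \<Rightarrow> bool" where
  "L2_subspace_dim X m \<longleftrightarrow> (\<exists>b. (\<forall>i<m. b i \<in> L2) \<and>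
     X = {(\<lambda>t. \<Sum>i<m. c i * b i t) | c. True} \<and>
     (\<forall>c. nrm 0 (\<lambda>t. \<Sum>i<m. c i * b i t) = 0 \<longrightarrow> (\<forall>i<m. c i = 0)))"

definition is_orth_proj :: "real \<Rightarrow> ((real \<Rightarrow> real) \<Rightarrow> (real \<Rightarrow> real)) \<Rightarrow> (real \<Rightarrow> real) set \<Rightarrow> bool" where
  "is_orth_proj \<sigma> Q X \<longleftrightarrow> (\<forall>x\<in>L2. Q x \<in> X \<and> (\<forall>z\<in>X. ip \<sigma> (\<lambda>t. x t - Q x t) z = 0))"

definition D :: "real \<Rightarrow> (real \<Rightarrow> real) \<Rightarrow> (real \<Rightarrow> real)" where
  "D \<sigma> x = (\<lambda>t. exp (\<sigma> * t) * x t)"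

definition dist_to :: "real \<Rightarrow> (real \<Rightarrow> real) \<Rightarrow> (real \<Rightarrow> real) set \<Rightarrow> real" where
  "dist_to \<sigma> x X = Inf ((\<lambda>z. nrm \<sigma> (\<lambda>t. x t - z t)) ` X)"

end

theory Submission
  imports Defs
begin

lemma inner_exp:
  fixes c r t :: real
  assumes "0 \<le> c" "r \<le> t"
  shows "integrable lborel (\<lambda>s. if r \<le> s \<and> s \<le> t then c * exp (- c * s) else 0)"
    and "(LINT s|lborel. (if r \<le> s \<and> s \<le> t then c * exp (- c * s) else 0)) = exp(- c * r) - exp(- c * t)"
proof -
  have eq: "(\<lambda>s. if r \<le> s \<and> s \<le> t then c * exp (- c * s) else 0) = (\<lambda>s. indicator {r..t} s *\<^sub>R (c * exp (- c * s)))"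
    by (auto simp: indicator_def)
  have cont: "continuous_on {r..t} (\<lambda>s. c * exp (- c * s))"
    by (intro continuous_intros)
  show "integrable lborel (\<lambda>s. if r \<le> s \<and> s \<le> t then c * exp (- c * s) else 0)"
    using borel_integrable_atLeastAtMost'[OF cont] unfolding eq set_integrable_def .
  have "(LINT s|lborel. indicator {r..t} s *\<^sub>R (c * exp (- c * s))) = (- exp(- c * t)) - (- exp (- c * r))"
  proof (rule integral_FTC_atLeastAtMost[OF assms(2) _ cont])
    fix x assume "r \<le> x" "x \<le> t"
    show "((\<lambda>s. - exp (- c * s)) has_vector_derivative c * exp (- c * x)) (at x within {r..t})"
      by (auto intro!: derivative_eq_intros simp: has_real_derivative_iff_has_vector_derivative[symmetric])
  qed
  then show "(LINT s|lborel. (if r \<le> s \<and> s \<le> t then c * exp (- c * s) else 0)) = exp(- c * r) - exp(- c * t)"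
    unfolding eq by simp
qed

lemma core_fubini:
  fixes h :: "real \<Rightarrow> real" and c t :: real
  assumes hm[measurable]: "h \<in> borel_measurable borel" and hi: "integrable lborel h"
    and c: "0 \<le> c"
  shows "(LINT s|lborel. (if 0 \<le> s \<and> s \<le> t then c * exp (- c * s) * (LINT r|lborel. (if 0 \<le> r \<and> r \<le> s then h r else 0)) else 0))
       = (LINT r|lborel. (if 0 \<le> r \<and> r \<le> t then h r * (exp (- c * r) - exp (- c * t)) else 0))"
proof -
  define f where "f r s = (if 0 \<le> r \<and> r \<le> s \<and> s \<le> t then c * exp (- c * s) * h r else 0)" for r s
  have fm: "(\<lambda>(r,s). f r s) \<in> borel_measurable (lborel \<Otimes>\<^sub>M lborel)"
    unfolding f_def by measurable
  have inner: "(LINT s|lborel. f r s) = (if 0 \<le> r \<and> r \<le> t then h r * (exp (- c * r) - exp (- c * t)) else 0)"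
    and inner_int: "integrable lborel (\<lambda>s. f r s)" for r
  proof -
    have "(LINT s|lborel. f r s) = (if 0 \<le> r \<and> r \<le> t then h r * (exp (- c * r) - exp (- c * t)) else 0)
        \<and> integrable lborel (\<lambda>s. f r s)"
    proof (cases "0 \<le> r \<and> r \<le> t")
      case True
      then have eq: "(\<lambda>s. f r s) = (\<lambda>s. h r * (if r \<le> s \<and> s \<le> t then c * exp (- c * s) else 0))"
        by (auto simp: f_def fun_eq_iff)
      show ?thesis unfolding eq using True inner_exp[OF c, of r t] by simp
    next
      case False
      then have eq: "(\<lambda>s. f r s) = (\<lambda>s. 0)"
        by (auto simp: f_def fun_eq_iff)
      show ?thesis unfolding eq using False by auto
    qed
    then show "(LINT s|lborel. f r s) = (if 0 \<le> r \<and> r \<le> t then h r * (exp (- c * r) - exp (- c * t)) else 0)"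
      and "integrable lborel (\<lambda>s. f r s)" by auto
  qed
  have inner2: "(LINT r|lborel. f r s) = (if 0 \<le> s \<and> s \<le> t then c * exp (- c * s) * (LINT r|lborel. (if 0 \<le> r \<and> r \<le> s then h r else 0)) else 0)" for s
  proof (cases "0 \<le> s \<and> s \<le> t")
    case True
    then have eq: "(\<lambda>r. f r s) = (\<lambda>r. c * exp (- c * s) * (if 0 \<le> r \<and> r \<le> s then h r else 0))"
      by (auto simp: f_def fun_eq_iff)
    show ?thesis unfolding eq using True by simp
  next
    case False
    then have eq: "(\<lambda>r. f r s) = (\<lambda>r. 0)"
      by (auto simp: f_def fun_eq_iff)
    show ?thesis unfolding eq using False by auto
  qed
  have int: "integrable (lborel \<Otimes>\<^sub>M lborel) (\<lambda>(r,s). f r s)"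
  proof (rule lborel_pair.Fubini_integrable[OF fm])
    show "AE r in lborel. integrable lborel (\<lambda>s. case (r, s) of (r, s) \<Rightarrow> f r s)"
      using inner_int by simp
    have nf: "(LINT s|lborel. norm (case (r, s) of (r, s) \<Rightarrow> f r s)) = (if 0 \<le> r \<and> r \<le> t then \<bar>h r\<bar> * (exp (- c * r) - exp (- c * t)) else 0)" for r
    proof -
      have "(\<lambda>s. norm (case (r, s) of (r, s) \<Rightarrow> f r s)) = (\<lambda>s. \<bar>h r\<bar> * (if 0 \<le> r \<and> r \<le> s \<and> s \<le> t then c * exp (- c * s) else 0))"
        using c by (auto simp: f_def fun_eq_iff abs_mult)
      moreover have "(LINT s|lborel. (if 0 \<le> r \<and> r \<le> s \<and> s \<le> t then c * exp (- c * s) else 0)) = (if 0 \<le> r \<and> r \<le> t then (exp (- c * r) - exp (- c * t)) else 0)"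
      proof (cases "0 \<le> r \<and> r \<le> t")
        case True then show ?thesis using inner_exp[OF c, of r t] by simp
      next
        case False
        then have "(\<lambda>s. (if 0 \<le> r \<and> r \<le> s \<and> s \<le> t then c * exp (- c * s) else 0)) = (\<lambda>s. 0)"
          by (auto simp: fun_eq_iff)
        then show ?thesis using False by auto
      qed
      ultimately show ?thesis by simp
    qed
    show "integrable lborel (\<lambda>r. LINT s|lborel. norm (case (r, s) of (r, s) \<Rightarrow> f r s))"
      unfolding nf
    proof (rule Bochner_Integration.integrable_bound[of _ "\<lambda>r. \<bar>h r\<bar>"])
      show "integrable lborel (\<lambda>r. \<bar>h r\<bar>)" using hi by simp
      show "(\<lambda>r. if 0 \<le> r \<and> r \<le> t then \<bar>h r\<bar> * (exp (- c * r) - exp (- c * t)) else 0) \<in> borel_measurable lborel"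
        by measurable
      show "AE r in lborel. norm (if 0 \<le> r \<and> r \<le> t then \<bar>h r\<bar> * (exp (- c * r) - exp (- c * t)) else 0) \<le> norm \<bar>h r\<bar>"
      proof (rule AE_I2)
        fix r
        show "norm (if 0 \<le> r \<and> r \<le> t then \<bar>h r\<bar> * (exp (- c * r) - exp (- c * t)) else 0) \<le> norm \<bar>h r\<bar>"
        proof (cases "0 \<le> r \<and> r \<le> t")
          case True
          have "exp (- c * t) \<le> exp (- c * r)" using True c by (simp add: mult_left_mono)
          moreover have "exp (- c * r) \<le> 1" using True c by simp
          moreover have "0 < exp (- c * t)" by simp
          ultimately have "\<bar>exp (- c * r) - exp (- c * t)\<bar> \<le> 1" by linarith
          then have "\<bar>h r\<bar> * \<bar>exp (- c * r) - exp (- c * t)\<bar> \<le> \<bar>h r\<bar> * 1"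
            by (intro mult_left_mono) auto
          then show ?thesis using True by (simp add: abs_mult)
        qed auto
      qed
    qed
  qed
  have "(LINT s|lborel. (LINT r|lborel. f r s)) = (LINT r|lborel. (LINT s|lborel. f r s))"
    using lborel_pair.Fubini_integral[OF int] .
  then show ?thesis unfolding inner inner2 .
qed


lemma cut_integrable:
  fixes h :: "real \<Rightarrow> real" and g :: "real \<Rightarrow> real" and P :: "real \<Rightarrow> bool"
  assumes [measurable]: "h \<in> borel_measurable borel" "g \<in> borel_measurable borel" "Measurable.pred borel P"
    and hi: "integrable lborel h" and gb: "\<And>s. P s \<Longrightarrow> \<bar>g s\<bar> \<le> B"
  shows "integrable lborel (\<lambda>s. if P s then g s * h s else 0)"
proof (rule Bochner_Integration.integrable_bound[of _ "\<lambda>s. B * \<bar>h s\<bar>"])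
  show "integrable lborel (\<lambda>s. B * \<bar>h s\<bar>)" using hi by simp
  show "(\<lambda>s. if P s then g s * h s else 0) \<in> borel_measurable lborel" by measurable
  show "AE s in lborel. norm (if P s then g s * h s else 0) \<le> norm (B * \<bar>h s\<bar>)"
  proof (rule AE_I2)
    fix s
    show "norm (if P s then g s * h s else 0) \<le> norm (B * \<bar>h s\<bar>)"
    proof (cases "P s")
      case True
      then have "\<bar>g s\<bar> * \<bar>h s\<bar> \<le> B * \<bar>h s\<bar>" using gb by (intro mult_right_mono) auto
      moreover have "0 \<le> B" using gb[OF True] by linarith
      ultimately show ?thesis using True by (simp add: abs_mult)
    qed simp
  qed
qed

lemma prod_rule_borel:
  fixes h :: "real \<Rightarrow> real" and \<sigma> x0 t :: real
  assumes hm[measurable]: "h \<in> borel_measurable borel" and hi: "integrable lborel h"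
    and s0: "0 \<le> \<sigma>" and t0: "0 \<le> t"
  defines "F \<equiv> (\<lambda>s. LINT r|lborel. (if 0 \<le> r \<and> r \<le> s then h r else 0))"
  shows "(LINT s|lborel. (if 0 \<le> s \<and> s \<le> t then exp (- \<sigma> * s) * (h s - \<sigma> * (x0 + F s)) else 0))
       = exp (- \<sigma> * t) * (x0 + F t) - x0"
proof -
  have pm: "(\<lambda>(s, r). if 0 \<le> r \<and> r \<le> s then h r else 0) \<in> borel_measurable (borel \<Otimes>\<^sub>M lborel)"
    by measurable
  have Fm[measurable]: "F \<in> borel_measurable borel"
    unfolding F_def using lborel.borel_measurable_lebesgue_integral[OF pm] by simp
  have Fb: "\<bar>F s\<bar> \<le> (LINT r|lborel. \<bar>h r\<bar>)" for s
  proof -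
    have i1: "integrable lborel (\<lambda>r. if 0 \<le> r \<and> r \<le> s then 1 * h r else 0)"
      by (rule cut_integrable[where B=1]) (use hi in auto)
    then have i1': "integrable lborel (\<lambda>r. if 0 \<le> r \<and> r \<le> s then h r else 0)" by (simp only: mult_1)
    have "\<bar>F s\<bar> \<le> (LINT r|lborel. norm (if 0 \<le> r \<and> r \<le> s then h r else 0))"
      unfolding F_def using integral_norm_bound[where f="\<lambda>r. if 0 \<le> r \<and> r \<le> s then h r else 0" and M=lborel] by (simp only: real_norm_def)
    also have "\<dots> \<le> (LINT r|lborel. \<bar>h r\<bar>)"
      using integrable_abs[OF i1'] hi by (intro integral_mono) auto
    finally show ?thesis .
  qed
  define K where "K = (LINT r|lborel. \<bar>h r\<bar>)"
  have i1: "integrable lborel (\<lambda>s. if 0 \<le> s \<and> s \<le> t then exp (- \<sigma> * s) * h s else 0)"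
    by (rule cut_integrable[where B=1]) (use hi s0 in auto)
  have i0: "integrable lborel (\<lambda>s. if 0 \<le> s \<and> s \<le> t then 1 * h s else 0)"
    by (rule cut_integrable[where B=1]) (use hi in auto)
  have i2: "integrable lborel (\<lambda>s. if 0 \<le> s \<and> s \<le> t then \<sigma> * exp (- \<sigma> * s) else 0)"
    using inner_exp(1)[OF s0 t0] .
  have i3': "integrable lborel (\<lambda>s. if 0 \<le> s \<and> s \<le> t then F s * (if 0 \<le> s \<and> s \<le> t then \<sigma> * exp (- \<sigma> * s) else 0) else 0)"
    by (rule cut_integrable[where B=K]) (use i2 Fb K_def in auto)
  have eqi: "(\<lambda>s. if 0 \<le> s \<and> s \<le> t then F s * (if 0 \<le> s \<and> s \<le> t then \<sigma> * exp (- \<sigma> * s) else 0) else 0)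
     = (\<lambda>s. if 0 \<le> s \<and> s \<le> t then F s * (\<sigma> * exp (- \<sigma> * s)) else 0)"
    by (auto simp: fun_eq_iff)
  have i3: "integrable lborel (\<lambda>s. if 0 \<le> s \<and> s \<le> t then F s * (\<sigma> * exp (- \<sigma> * s)) else 0)"
    using i3' unfolding eqi .
  have eq: "(\<lambda>s. if 0 \<le> s \<and> s \<le> t then exp (- \<sigma> * s) * (h s - \<sigma> * (x0 + F s)) else 0)
      = (\<lambda>s. (if 0 \<le> s \<and> s \<le> t then exp (- \<sigma> * s) * h s else 0)
          - x0 * (if 0 \<le> s \<and> s \<le> t then \<sigma> * exp (- \<sigma> * s) else 0)
          - (if 0 \<le> s \<and> s \<le> t then F s * (\<sigma> * exp (- \<sigma> * s)) else 0))"
    by (auto simp: fun_eq_iff algebra_simps)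
  have "(LINT s|lborel. (if 0 \<le> s \<and> s \<le> t then exp (- \<sigma> * s) * (h s - \<sigma> * (x0 + F s)) else 0))
     = (LINT s|lborel. (if 0 \<le> s \<and> s \<le> t then exp (- \<sigma> * s) * h s else 0))
       - x0 * (LINT s|lborel. (if 0 \<le> s \<and> s \<le> t then \<sigma> * exp (- \<sigma> * s) else 0))
       - (LINT s|lborel. (if 0 \<le> s \<and> s \<le> t then F s * (\<sigma> * exp (- \<sigma> * s)) else 0))"
    unfolding eq using i1 i2 i3 by simp
  also have "(LINT s|lborel. (if 0 \<le> s \<and> s \<le> t then \<sigma> * exp (- \<sigma> * s) else 0)) = 1 - exp (- \<sigma> * t)"
    using inner_exp(2)[OF s0 t0] by simp
  also have "(LINT s|lborel. (if 0 \<le> s \<and> s \<le> t then F s * (\<sigma> * exp (- \<sigma> * s)) else 0))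
     = (LINT s|lborel. (if 0 \<le> s \<and> s \<le> t then \<sigma> * exp (- \<sigma> * s) * F s else 0))"
    by (rule Bochner_Integration.integral_cong) auto
  also have "\<dots> = (LINT r|lborel. (if 0 \<le> r \<and> r \<le> t then h r * (exp (- \<sigma> * r) - exp (- \<sigma> * t)) else 0))"
    unfolding F_def by (rule core_fubini[OF hm hi s0])
  also have "\<dots> = (LINT r|lborel. (if 0 \<le> r \<and> r \<le> t then exp (- \<sigma> * r) * h r else 0) - exp (- \<sigma> * t) * (if 0 \<le> r \<and> r \<le> t then 1 * h r else 0))"
    by (rule Bochner_Integration.integral_cong) (auto simp: algebra_simps)
  also have "\<dots> = (LINT r|lborel. (if 0 \<le> r \<and> r \<le> t then exp (- \<sigma> * r) * h r else 0)) - exp (- \<sigma> * t) * F t"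
    using i1 i0 unfolding F_def by simp
  finally show ?thesis by (simp add: algebra_simps)
qed


lemma transfer:
  fixes f \<phi> :: "real \<Rightarrow> real" and a b :: real
  assumes \<phi>m[measurable]: "\<phi> \<in> borel_measurable borel"
    and ae: "AE s in lborel. a \<le> s \<and> s \<le> b \<longrightarrow> f s = \<phi> s"
  shows "(LINT s|lebesgue_on {a..b}. f s) = (LINT s|lborel. (if a \<le> s \<and> s \<le> b then \<phi> s else 0))"
proof -
  let ?g = "\<lambda>s. if a \<le> s \<and> s \<le> b then \<phi> s else 0"
  have gm: "?g \<in> borel_measurable lborel" by measurable
  have gml: "?g \<in> borel_measurable lebesgue" using gm by (rule measurable_completion)
  have ae': "AE s in lebesgue. ?g s = (if s \<in> {a..b} then f s else 0)"
    using AE_completion[OF ae] by (auto elim!: eventually_mono)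
  have fm: "(\<lambda>s. if s \<in> {a..b} then f s else 0) \<in> borel_measurable lebesgue"
    by (rule borel_measurable_AE[OF gml ae'])
  have "(LINT s|lebesgue_on {a..b}. f s) = (LINT s|lebesgue. (if s \<in> {a..b} then f s else 0))"
    by (rule Lebesgue_Measure.integral_restrict_UNIV[symmetric]) simp
  also have "\<dots> = (LINT s|lebesgue. ?g s)"
    by (rule integral_cong_AE[OF fm gml]) (use ae' in \<open>auto elim!: eventually_mono\<close>)
  also have "\<dots> = (LINT s|lborel. ?g s)"
    by (rule integral_completion[OF gm])
  finally show ?thesis .
qed

lemma abs_le_1_sq: "\<bar>a::real\<bar> \<le> 1 + a\<^sup>2"
proof (cases "\<bar>a\<bar> \<le> 1")
  case False
  then have "\<bar>a\<bar> * 1 \<le> \<bar>a\<bar> * \<bar>a\<bar>" by (intro mult_left_mono) auto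
  then show ?thesis by (simp add: power2_eq_square abs_mult_self)
qed (simp add: add_increasing2)

lemma L2_integrable:
  assumes "u \<in> L2" shows "integrable (lebesgue_on {0..1}) u"
proof (rule Bochner_Integration.integrable_bound[of _ "\<lambda>s. 1 + (u s)\<^sup>2"])
  show "integrable (lebesgue_on {0..1}) (\<lambda>s. 1 + (u s)\<^sup>2)"
    using assms unfolding L2_def by simp
  show "u \<in> borel_measurable (lebesgue_on {0..1})" using assms unfolding L2_def by simp
  show "AE s in lebesgue_on {0..1}. norm (u s) \<le> norm (1 + (u s)\<^sup>2)"
    using abs_le_1_sq by (intro AE_I2) (simp add: add_increasing2)
qed

lemma wd_setup:
  assumes wd: "has_weak_deriv x x'"
  obtains h where "h \<in> borel_measurable borel" "integrable lborel h"
    "AE s in lborel. 0 \<le> s \<and> s \<le> 1 \<longrightarrow> x' s = h s"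
    "\<And>t. 0 \<le> t \<Longrightarrow> t \<le> 1 \<Longrightarrow> x t = x 0 + (LINT r|lborel. (if 0 \<le> r \<and> r \<le> t then h r else 0))"
proof -
  have x'L2: "x' \<in> L2" using wd unfolding has_weak_deriv_def by (rule conjunct1)
  have xid0: "\<forall>t\<in>{0..1}. x t = x 0 + (LINT s|lebesgue_on {0..t}. x' s)"
    using wd unfolding has_weak_deriv_def by (rule conjunct2)
  have xm: "x' \<in> borel_measurable (lebesgue_on {0..1})" using x'L2 unfolding L2_def by simp
  have xi: "integrable (lebesgue_on {0..1}) x'" by (rule L2_integrable[OF x'L2])
  define g where "g s = (if s \<in> {0..1} then x' s else 0)" for s :: real
  have gm: "g \<in> borel_measurable lebesgue" unfolding g_def
    by (rule borel_measurable_if_I[OF xm]) simp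
  have gi: "integrable lebesgue g" unfolding g_def
    by (rule Lebesgue_Measure.integrable_restrict_UNIV[THEN iffD2, OF _ xi]) simp
  obtain h where hm: "h \<in> borel_measurable lborel" and ae: "AE s in lborel. g s = h s"
    using completion_ex_borel_measurable_real[OF gm] by blast
  have hm': "h \<in> borel_measurable borel" using hm by (simp add: measurable_lborel1)
  have "integrable lebesgue h"
    using gi by (rule integrable_cong_AE_imp[OF _ measurable_completion[OF hm] AE_completion[OF ae]])
  then have hi: "integrable lborel h" using integrable_completion[OF hm] by blast
  have ae2: "AE s in lborel. 0 \<le> s \<and> s \<le> 1 \<longrightarrow> x' s = h s"
    using ae by (rule eventually_mono) (auto simp: g_def)
  show ?thesis
  proof (rule that[OF hm' hi ae2])
    fix t :: real assume t: "0 \<le> t" "t \<le> 1"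
    have "(LINT s|lebesgue_on {0..t}. x' s) = (LINT r|lborel. (if 0 \<le> r \<and> r \<le> t then h r else 0))"
      by (rule transfer[OF hm']) (use ae2 t in \<open>auto elim!: eventually_mono\<close>)
    then show "x t = x 0 + (LINT r|lborel. (if 0 \<le> r \<and> r \<le> t then h r else 0))"
      using bspec[OF xid0, of t] t by simp
  qed
qed


lemma F_props:
  fixes h :: "real \<Rightarrow> real"
  assumes hm[measurable]: "h \<in> borel_measurable borel" and hi: "integrable lborel h"
  shows "(\<lambda>s. LINT r|lborel. (if 0 \<le> r \<and> r \<le> s then h r else 0)) \<in> borel_measurable borel"
    and "\<bar>LINT r|lborel. (if 0 \<le> r \<and> r \<le> s then h r else 0)\<bar> \<le> (LINT r|lborel. \<bar>h r\<bar>)"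
proof -
  have pm: "(\<lambda>(s, r). if 0 \<le> r \<and> r \<le> s then h r else 0) \<in> borel_measurable (borel \<Otimes>\<^sub>M lborel)"
    by measurable
  show "(\<lambda>s. LINT r|lborel. (if 0 \<le> r \<and> r \<le> s then h r else 0)) \<in> borel_measurable borel"
    using lborel.borel_measurable_lebesgue_integral[OF pm] by simp
  have i1: "integrable lborel (\<lambda>r. if 0 \<le> r \<and> r \<le> s then 1 * h r else 0)"
    by (rule cut_integrable[where B=1]) (use hi in auto)
  then have i1': "integrable lborel (\<lambda>r. if 0 \<le> r \<and> r \<le> s then h r else 0)" by (simp only: mult_1)
  have "\<bar>LINT r|lborel. (if 0 \<le> r \<and> r \<le> s then h r else 0)\<bar> \<le> (LINT r|lborel. norm (if 0 \<le> r \<and> r \<le> s then h r else 0))"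
    using integral_norm_bound[where f="\<lambda>r. if 0 \<le> r \<and> r \<le> s then h r else 0" and M=lborel] by (simp only: real_norm_def)
  also have "\<dots> \<le> (LINT r|lborel. \<bar>h r\<bar>)"
    using integrable_abs[OF i1'] hi by (intro integral_mono) auto
  finally show "\<bar>LINT r|lborel. (if 0 \<le> r \<and> r \<le> s then h r else 0)\<bar> \<le> (LINT r|lborel. \<bar>h r\<bar>)" .
qed

lemma wd_bdd_meas:
  assumes wd: "has_weak_deriv x x'"
  shows "x \<in> borel_measurable (lebesgue_on {0..1})" and "\<exists>B. \<forall>s\<in>{0..1}. \<bar>x s\<bar> \<le> B"
proof -
  obtain h where hm[measurable]: "h \<in> borel_measurable borel" and hi: "integrable lborel h"
    and xid: "\<And>t. 0 \<le> t \<Longrightarrow> t \<le> 1 \<Longrightarrow> x t = x 0 + (LINT r|lborel. (if 0 \<le> r \<and> r \<le> t then h r else 0))"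
    by (rule wd_setup[OF wd]) blast
  define F where "F = (\<lambda>s. LINT r|lborel. (if 0 \<le> r \<and> r \<le> s then h r else 0))"
  have Fm[measurable]: "F \<in> borel_measurable borel" unfolding F_def by (rule F_props(1)[OF hm hi])
  have Fb: "\<bar>F s\<bar> \<le> (LINT r|lborel. \<bar>h r\<bar>)" for s unfolding F_def by (rule F_props(2)[OF hm hi])
  have "(\<lambda>s. x 0 + F s) \<in> borel_measurable lborel" by measurable
  then have "(\<lambda>s. x 0 + F s) \<in> borel_measurable lebesgue" by (rule measurable_completion)
  then have m1: "(\<lambda>s. x 0 + F s) \<in> borel_measurable (lebesgue_on {0..1})" by (rule measurable_restrict_space1)
  show "x \<in> borel_measurable (lebesgue_on {0..1})"
  proof (rule measurable_cong[THEN iffD1, rotated])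
    show "(\<lambda>s. x 0 + F s) \<in> borel_measurable (lebesgue_on {0..1})" by (rule m1)
    fix s :: real assume "s \<in> space (lebesgue_on {0..1})"
    then have s: "0 \<le> s" "s \<le> 1" by auto
    show "x 0 + F s = x s" using xid[OF s] unfolding F_def by (rule sym)
  qed
  show "\<exists>B. \<forall>s\<in>{0..1}. \<bar>x s\<bar> \<le> B"
  proof (intro exI ballI)
    fix s :: real assume "s \<in> {0..1}"
    then have "x s = x 0 + F s" using xid[of s] unfolding F_def by simp
    then show "\<bar>x s\<bar> \<le> \<bar>x 0\<bar> + (LINT r|lborel. \<bar>h r\<bar>)" using Fb[of s] by linarith
  qed
qed


lemma borel_to_lebesgue_on:
  fixes f :: "real \<Rightarrow> real"
  assumes "f \<in> borel_measurable borel"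
  shows "f \<in> borel_measurable (lebesgue_on S)"
  by (rule measurable_restrict_space1, rule measurable_completion) (use assms in simp)

lemma sq_bound:
  fixes e a s x B :: real
  assumes e0: "0 \<le> e" and e1: "e \<le> 1" and xb: "\<bar>x\<bar> \<le> B"
  shows "(e * (a - s * x))\<^sup>2 \<le> 2 * a\<^sup>2 + 2 * s\<^sup>2 * B\<^sup>2"
proof -
  have e2: "e\<^sup>2 \<le> 1" using e0 e1 by (simp add: power_le_one)
  have "(e * (a - s * x))\<^sup>2 = e\<^sup>2 * (a - s * x)\<^sup>2" by (simp add: power_mult_distrib)
  also have "\<dots> \<le> 1 * (a - s * x)\<^sup>2" by (rule mult_right_mono) (use e2 in auto)
  also have "\<dots> \<le> 2 * a\<^sup>2 + 2 * (s * x)\<^sup>2"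
  proof -
    have "0 \<le> (a + s * x)\<^sup>2" by simp
    then show ?thesis by (simp add: power2_eq_square algebra_simps)
  qed
  also have "(s * x)\<^sup>2 \<le> s\<^sup>2 * B\<^sup>2"
  proof -
    have "\<bar>x\<bar> \<le> \<bar>B\<bar>" using xb by simp
    then have "x\<^sup>2 \<le> B\<^sup>2" by (simp add: abs_le_square_iff)
    then show ?thesis by (simp add: power_mult_distrib mult_left_mono)
  qed
  finally show ?thesis by simp
qed

lemma wd_D:
  assumes wd: "has_weak_deriv x x'" and s0: "0 \<le> \<sigma>"
  shows "has_weak_deriv (D (- \<sigma>) x) (\<lambda>s. exp (- \<sigma> * s) * (x' s - \<sigma> * x s))"
proof -
  obtain h where hm[measurable]: "h \<in> borel_measurable borel" and hi: "integrable lborel h"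
    and ae2: "AE s in lborel. 0 \<le> s \<and> s \<le> 1 \<longrightarrow> x' s = h s"
    and xid: "\<And>t. 0 \<le> t \<Longrightarrow> t \<le> 1 \<Longrightarrow> x t = x 0 + (LINT r|lborel. (if 0 \<le> r \<and> r \<le> t then h r else 0))"
    by (rule wd_setup[OF wd]) blast
  define F where "F = (\<lambda>s. LINT r|lborel. (if 0 \<le> r \<and> r \<le> s then h r else 0))"
  have Fm[measurable]: "F \<in> borel_measurable borel" unfolding F_def by (rule F_props(1)[OF hm hi])
  have x'L2: "x' \<in> L2" using wd unfolding has_weak_deriv_def by (rule conjunct1)
  have x'm[measurable]: "x' \<in> borel_measurable (lebesgue_on {0..1})" using x'L2 unfolding L2_def by simp
  have x'sq: "integrable (lebesgue_on {0..1}) (\<lambda>s. (x' s)\<^sup>2)" using x'L2 unfolding L2_def by simp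
  have xm[measurable]: "x \<in> borel_measurable (lebesgue_on {0..1})" by (rule wd_bdd_meas(1)[OF wd])
  obtain B where B: "\<And>s. s \<in> {0..1} \<Longrightarrow> \<bar>x s\<bar> \<le> B" using wd_bdd_meas(2)[OF wd] by blast
  have yL2: "(\<lambda>s. exp (- \<sigma> * s) * (x' s - \<sigma> * x s)) \<in> L2"
    unfolding L2_def
  proof (intro CollectI conjI)
    have em: "(\<lambda>s. exp (- \<sigma> * s)) \<in> borel_measurable (lebesgue_on {0..1})"
      by (rule borel_to_lebesgue_on) measurable
    show ym: "(\<lambda>s. exp (- \<sigma> * s) * (x' s - \<sigma> * x s)) \<in> borel_measurable (lebesgue_on {0..1})"
      using em x'm xm by (intro borel_measurable_times borel_measurable_diff borel_measurable_const) auto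
    show "integrable (lebesgue_on {0..1}) (\<lambda>s. (exp (- \<sigma> * s) * (x' s - \<sigma> * x s))\<^sup>2)"
    proof (rule Bochner_Integration.integrable_bound[of _ "\<lambda>s. 2 * (x' s)\<^sup>2 + 2 * \<sigma>\<^sup>2 * B\<^sup>2"])
      show "integrable (lebesgue_on {0..1}) (\<lambda>s. 2 * (x' s)\<^sup>2 + 2 * \<sigma>\<^sup>2 * B\<^sup>2)"
        using x'sq by (intro Bochner_Integration.integrable_add integrable_mult_right) auto
      show "(\<lambda>s. (exp (- \<sigma> * s) * (x' s - \<sigma> * x s))\<^sup>2) \<in> borel_measurable (lebesgue_on {0..1})"
        using ym by (rule borel_measurable_power)
      have "norm ((exp (- \<sigma> * s) * (x' s - \<sigma> * x s))\<^sup>2) \<le> norm (2 * (x' s)\<^sup>2 + 2 * \<sigma>\<^sup>2 * B\<^sup>2)"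
        if s: "s \<in> {0..1}" for s
      proof -
        have e1: "exp (- \<sigma> * s) \<le> 1" using s s0 by simp
        have "(exp (- \<sigma> * s) * (x' s - \<sigma> * x s))\<^sup>2 \<le> 2 * (x' s)\<^sup>2 + 2 * \<sigma>\<^sup>2 * B\<^sup>2"
          by (rule sq_bound[OF _ e1 B[OF s]]) simp
        moreover have "0 \<le> 2 * (x' s)\<^sup>2 + 2 * \<sigma>\<^sup>2 * B\<^sup>2" by simp
        ultimately show ?thesis by simp
      qed
      then show "AE s in lebesgue_on {0..1}. norm ((exp (- \<sigma> * s) * (x' s - \<sigma> * x s))\<^sup>2) \<le> norm (2 * (x' s)\<^sup>2 + 2 * \<sigma>\<^sup>2 * B\<^sup>2)"
        using AE_space[of "lebesgue_on {0..1}"] by (rule_tac eventually_mono) auto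
    qed
  qed
  show ?thesis
    unfolding has_weak_deriv_def
  proof (intro conjI yL2 ballI)
    fix t :: real assume "t \<in> {0..1}"
    then have t: "0 \<le> t" "t \<le> 1" by auto
    have "(LINT s|lebesgue_on {0..t}. exp (- \<sigma> * s) * (x' s - \<sigma> * x s))
        = (LINT s|lborel. (if 0 \<le> s \<and> s \<le> t then exp (- \<sigma> * s) * (h s - \<sigma> * (x 0 + F s)) else 0))"
    proof (rule transfer)
      show "(\<lambda>s. exp (- \<sigma> * s) * (h s - \<sigma> * (x 0 + F s))) \<in> borel_measurable borel" by measurable
      show "AE s in lborel. 0 \<le> s \<and> s \<le> t \<longrightarrow> exp (- \<sigma> * s) * (x' s - \<sigma> * x s) = exp (- \<sigma> * s) * (h s - \<sigma> * (x 0 + F s))"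
        using ae2
      proof (rule eventually_mono)
        fix s assume hs: "0 \<le> s \<and> s \<le> 1 \<longrightarrow> x' s = h s"
        show "0 \<le> s \<and> s \<le> t \<longrightarrow> exp (- \<sigma> * s) * (x' s - \<sigma> * x s) = exp (- \<sigma> * s) * (h s - \<sigma> * (x 0 + F s))"
        proof
          assume "0 \<le> s \<and> s \<le> t"
          then have s: "0 \<le> s" "s \<le> 1" using t by auto
          have "x s = x 0 + F s" using xid[OF s] unfolding F_def .
          then show "exp (- \<sigma> * s) * (x' s - \<sigma> * x s) = exp (- \<sigma> * s) * (h s - \<sigma> * (x 0 + F s))"
            using hs s by simp
        qed
      qed
    qed
    also have "\<dots> = exp (- \<sigma> * t) * (x 0 + F t) - x 0"
      unfolding F_def by (rule prod_rule_borel[OF hm hi s0 t(1)])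
    finally have eqi: "(LINT s|lebesgue_on {0..t}. exp (- \<sigma> * s) * (x' s - \<sigma> * x s)) = exp (- \<sigma> * t) * (x 0 + F t) - x 0" .
    have "x t = x 0 + F t" using xid[OF t] unfolding F_def .
    then show "D (- \<sigma>) x t = D (- \<sigma>) x 0 + (LINT s|lebesgue_on {0..t}. exp (- \<sigma> * s) * (x' s - \<sigma> * x s))"
      unfolding eqi D_def by simp
  qed
qed


lemma exp_facts:
  fixes \<sigma> t :: real
  shows "exp (\<sigma> * t) * exp (- \<sigma> * t) = 1" and "exp (- 2 * \<sigma> * t) = exp (- \<sigma> * t) * exp (- \<sigma> * t)"
  by (simp_all flip: exp_add)

lemma ip_proj_alg:
  fixes \<sigma> t u v w :: real
  shows "exp (- 2 * \<sigma> * t) * (u - exp (\<sigma> * t) * v) * (exp (\<sigma> * t) * w)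
       = exp (- 2 * 0 * t) * (exp (- \<sigma> * t) * u - v) * w"
proof -
  have "exp (\<sigma> * t) * exp (- \<sigma> * t) = 1" by (rule exp_facts(1))
  then show ?thesis unfolding exp_facts(2) by simp algebra
qed

lemma nrm_alg:
  fixes \<sigma> t u v :: real
  shows "exp (- 2 * \<sigma> * t) * (u - exp (\<sigma> * t) * v) * (u - exp (\<sigma> * t) * v)
       = exp (- 2 * 0 * t) * (exp (- \<sigma> * t) * u - v) * (exp (- \<sigma> * t) * u - v)"
proof -
  have "exp (\<sigma> * t) * exp (- \<sigma> * t) = 1" by (rule exp_facts(1))
  then show ?thesis unfolding exp_facts(2) by simp algebra
qed

lemma nrm_nonneg: "0 \<le> nrm \<sigma> f"
proof -
  have "0 \<le> ip \<sigma> f f" unfolding ip_def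
    by (rule Bochner_Integration.integral_nonneg) (simp add: mult.assoc)
  then show ?thesis unfolding nrm_def by simp
qed

lemma nrm_sq: "(nrm \<sigma> f)\<^sup>2 = ip \<sigma> f f"
proof -
  have "0 \<le> ip \<sigma> f f" unfolding ip_def
    by (rule Bochner_Integration.integral_nonneg) (simp add: mult.assoc)
  then show ?thesis unfolding nrm_def by simp
qed

lemma ip_const1: "ip 0 (\<lambda>_. 1) (\<lambda>_. 1) = 1"
  unfolding ip_def by (simp add: measure_restrict_space)


lemma D_L2:
  assumes s0: "0 \<le> \<sigma>" and xL: "x \<in> L2"
  shows "D (- \<sigma>) x \<in> L2"
proof -
  have xm: "x \<in> borel_measurable (lebesgue_on {0..1})" and xi: "integrable (lebesgue_on {0..1}) (\<lambda>t. (x t)\<^sup>2)"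
    using xL unfolding L2_def by auto
  have em: "(\<lambda>s. exp (- \<sigma> * s)) \<in> borel_measurable (lebesgue_on {0..1})"
    by (rule borel_to_lebesgue_on) measurable
  have ym: "D (- \<sigma>) x \<in> borel_measurable (lebesgue_on {0..1})"
    unfolding D_def using em xm by (rule borel_measurable_times)
  show ?thesis unfolding L2_def
  proof (intro CollectI conjI ym)
    show "integrable (lebesgue_on {0..1}) (\<lambda>t. (D (- \<sigma>) x t)\<^sup>2)"
    proof (rule Bochner_Integration.integrable_bound[OF xi])
      show "(\<lambda>t. (D (- \<sigma>) x t)\<^sup>2) \<in> borel_measurable (lebesgue_on {0..1})"
        using ym by (rule borel_measurable_power)
      have "norm ((D (- \<sigma>) x t)\<^sup>2) \<le> norm ((x t)\<^sup>2)" if t: "t \<in> {0..1}" for t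
      proof -
        have e1: "exp (- \<sigma> * t) \<le> 1" using t s0 by simp
        have "(D (- \<sigma>) x t)\<^sup>2 \<le> 2 * 0\<^sup>2 + 2 * 0\<^sup>2 * 0\<^sup>2" if "False" using that by simp
        have "(exp (- \<sigma> * t))\<^sup>2 \<le> 1" using e1 by (simp add: power_le_one)
        then have "(exp (- \<sigma> * t))\<^sup>2 * (x t)\<^sup>2 \<le> 1 * (x t)\<^sup>2" by (intro mult_right_mono) auto
        then show ?thesis unfolding D_def by (simp add: power_mult_distrib)
      qed
      then show "AE t in lebesgue_on {0..1}. norm ((D (- \<sigma>) x t)\<^sup>2) \<le> norm ((x t)\<^sup>2)"
        using AE_space[of "lebesgue_on {0..1}"] by (rule_tac eventually_mono) auto
    qed
  qed
qed

lemma proj_part: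
  assumes P: "is_orth_proj 0 Q X" and s0: "0 \<le> \<sigma>"
  shows "is_orth_proj \<sigma> (\<lambda>x. D \<sigma> (Q (D (- \<sigma>) x))) (D \<sigma> ` X)"
  unfolding is_orth_proj_def
proof (intro ballI conjI)
  fix x assume xL: "x \<in> L2"
  have yL: "D (- \<sigma>) x \<in> L2" by (rule D_L2[OF s0 xL])
  have QX: "Q (D (- \<sigma>) x) \<in> X" and orth: "\<forall>z\<in>X. ip 0 (\<lambda>t. D (- \<sigma>) x t - Q (D (- \<sigma>) x) t) z = 0"
    using P yL unfolding is_orth_proj_def by auto
  show "D \<sigma> (Q (D (- \<sigma>) x)) \<in> D \<sigma> ` X" using QX by (rule imageI)
  fix w assume "w \<in> D \<sigma> ` X"
  then obtain z where z: "z \<in> X" and w: "w = D \<sigma> z" by blast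
  have "ip \<sigma> (\<lambda>t. x t - D \<sigma> (Q (D (- \<sigma>) x)) t) w = ip 0 (\<lambda>t. D (- \<sigma>) x t - Q (D (- \<sigma>) x) t) z"
    unfolding ip_def w D_def
    by (rule Bochner_Integration.integral_cong[OF refl]) (rule ip_proj_alg)
  then show "ip \<sigma> (\<lambda>t. x t - D \<sigma> (Q (D (- \<sigma>) x)) t) w = 0" using orth z by simp
qed


lemma sq_alg2:
  fixes e a b s :: real
  shows "exp (- 2 * 0 * t) * (e * (a - s * b)) * (e * (a - s * b)) \<le> 2 * (e * e * a * a) + 2 * s\<^sup>2 * (e * e * b * b)"
proof -
  have "0 \<le> (a + s * b)\<^sup>2" by simp
  then have "(a - s * b)\<^sup>2 \<le> 2 * a\<^sup>2 + 2 * s\<^sup>2 * b\<^sup>2" by (simp add: power2_eq_square algebra_simps)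
  then have "e\<^sup>2 * (a - s * b)\<^sup>2 \<le> e\<^sup>2 * (2 * a\<^sup>2 + 2 * s\<^sup>2 * b\<^sup>2)" by (intro mult_left_mono) auto
  then show ?thesis by (simp add: power2_eq_square algebra_simps)
qed

lemma sqrt_alg:
  fixes a b c s :: real
  assumes a: "0 \<le> a" and b: "0 \<le> b" and s: "0 \<le> s" and c: "c \<le> 2 * b + 2 * s\<^sup>2 * a" and c0: "0 \<le> c"
  shows "(1/2) * sqrt (a + c) \<le> sqrt 2 * (1 + s) * ((1/2) * sqrt (a + b))"
proof -
  have "a + c \<le> 2 * (1 + s)\<^sup>2 * (a + b)"
    using a b s c by (simp add: power2_eq_square algebra_simps) (smt (verit, best) mult_nonneg_nonneg)
  then have "sqrt (a + c) \<le> sqrt (2 * (1 + s)\<^sup>2 * (a + b))" by (rule real_sqrt_le_mono)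
  also have "\<dots> = sqrt 2 * (1 + s) * sqrt (a + b)" using s by (simp add: real_sqrt_mult)
  finally show ?thesis by simp
qed

lemma norm_part:
  assumes wd: "has_weak_deriv x x'" and s0: "0 \<le> \<sigma>"
  shows "nrm1 0 (D (- \<sigma>) x) (\<lambda>s. exp (- \<sigma> * s) * (x' s - \<sigma> * x s)) \<le> sqrt 2 * (1 + \<sigma>) * nrm1 \<sigma> x x'"
proof -
  define y' where "y' = (\<lambda>s. exp (- \<sigma> * s) * (x' s - \<sigma> * x s))"
  have x'L2: "x' \<in> L2" using wd unfolding has_weak_deriv_def by (rule conjunct1)
  have x'm: "x' \<in> borel_measurable (lebesgue_on {0..1})" using x'L2 unfolding L2_def by simp
  have x'sq: "integrable (lebesgue_on {0..1}) (\<lambda>s. (x' s)\<^sup>2)" using x'L2 unfolding L2_def by simp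
  have xm: "x \<in> borel_measurable (lebesgue_on {0..1})" by (rule wd_bdd_meas(1)[OF wd])
  obtain B where B: "\<And>s. s \<in> {0..1} \<Longrightarrow> \<bar>x s\<bar> \<le> B" using wd_bdd_meas(2)[OF wd] by blast
  have em: "(\<lambda>s. exp (- 2 * \<sigma> * s)) \<in> borel_measurable (lebesgue_on {0..1})"
    by (rule borel_to_lebesgue_on) measurable
  have y'L2: "y' \<in> L2" unfolding y'_def using wd_D[OF wd s0] unfolding has_weak_deriv_def by (rule conjunct1)
  have iy: "integrable (lebesgue_on {0..1}) (\<lambda>t. exp (- 2 * 0 * t) * y' t * y' t)"
    using y'L2 unfolding L2_def by (simp add: power2_eq_square)
  have ix': "integrable (lebesgue_on {0..1}) (\<lambda>t. exp (- 2 * \<sigma> * t) * x' t * x' t)"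
  proof (rule Bochner_Integration.integrable_bound[OF x'sq])
    show "(\<lambda>t. exp (- 2 * \<sigma> * t) * x' t * x' t) \<in> borel_measurable (lebesgue_on {0..1})"
      using em x'm by (intro borel_measurable_times)
    have "norm (exp (- 2 * \<sigma> * t) * x' t * x' t) \<le> norm ((x' t)\<^sup>2)" if t: "t \<in> {0..1}" for t
    proof -
      have e1: "exp (- 2 * \<sigma> * t) \<le> 1" using t s0 by simp
      have "exp (- 2 * \<sigma> * t) * (x' t * x' t) \<le> 1 * (x' t * x' t)" using e1 by (intro mult_right_mono) auto
      then show ?thesis by (simp add: power2_eq_square abs_mult mult.assoc)
    qed
    then show "AE t in lebesgue_on {0..1}. norm (exp (- 2 * \<sigma> * t) * x' t * x' t) \<le> norm ((x' t)\<^sup>2)"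
      using AE_space[of "lebesgue_on {0..1}"] by (rule_tac eventually_mono) auto
  qed
  have ix: "integrable (lebesgue_on {0..1}) (\<lambda>t. exp (- 2 * \<sigma> * t) * x t * x t)"
  proof (rule Bochner_Integration.integrable_bound[of _ "\<lambda>t::real. B\<^sup>2"])
    show "integrable (lebesgue_on {0..1}) (\<lambda>t::real. B\<^sup>2)" by (rule Lebesgue_Measure.integrable_const_ivl)
    show "(\<lambda>t. exp (- 2 * \<sigma> * t) * x t * x t) \<in> borel_measurable (lebesgue_on {0..1})"
      using em xm by (intro borel_measurable_times)
    have "norm (exp (- 2 * \<sigma> * t) * x t * x t) \<le> norm (B\<^sup>2)" if t: "t \<in> {0..1}" for t
    proof -
      have e1: "exp (- 2 * \<sigma> * t) \<le> 1" using t s0 by simp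
      have "exp (- 2 * \<sigma> * t) * (x t * x t) \<le> 1 * (x t * x t)" using e1 by (intro mult_right_mono) auto
      moreover have "\<bar>x t\<bar> \<le> \<bar>B\<bar>" using B[OF t] by simp
      then have "x t * x t \<le> B\<^sup>2" by (simp add: abs_le_square_iff power2_eq_square)
      ultimately show ?thesis by (simp add: abs_mult mult.assoc)
    qed
    then show "AE t in lebesgue_on {0..1}. norm (exp (- 2 * \<sigma> * t) * x t * x t) \<le> norm (B\<^sup>2)"
      using AE_space[of "lebesgue_on {0..1}"] by (rule_tac eventually_mono) auto
  qed
  have A: "ip 0 (D (- \<sigma>) x) (D (- \<sigma>) x) = ip \<sigma> x x"
    unfolding ip_def D_def
    by (rule Bochner_Integration.integral_cong[OF refl]) (subst exp_facts(2), simp)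
  have "ip 0 y' y' \<le> (LINT t|lebesgue_on {0..1}. 2 * (exp (- 2 * \<sigma> * t) * x' t * x' t) + 2 * \<sigma>\<^sup>2 * (exp (- 2 * \<sigma> * t) * x t * x t))"
    unfolding ip_def
  proof (rule integral_mono)
    show "integrable (lebesgue_on {0..1}) (\<lambda>t. exp (- 2 * 0 * t) * y' t * y' t)" by (rule iy)
    show "integrable (lebesgue_on {0..1}) (\<lambda>t. 2 * (exp (- 2 * \<sigma> * t) * x' t * x' t) + 2 * \<sigma>\<^sup>2 * (exp (- 2 * \<sigma> * t) * x t * x t))"
      using ix ix' by simp
    fix t
    show "exp (- 2 * 0 * t) * y' t * y' t \<le> 2 * (exp (- 2 * \<sigma> * t) * x' t * x' t) + 2 * \<sigma>\<^sup>2 * (exp (- 2 * \<sigma> * t) * x t * x t)"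
      unfolding y'_def exp_facts(2)[of \<sigma> t] by (rule sq_alg2)
  qed
  also have "\<dots> = 2 * ip \<sigma> x' x' + 2 * \<sigma>\<^sup>2 * ip \<sigma> x x"
    unfolding ip_def using ix ix' by simp
  finally have C: "ip 0 y' y' \<le> 2 * ip \<sigma> x' x' + 2 * \<sigma>\<^sup>2 * ip \<sigma> x x" .
  have "nrm1 0 (D (- \<sigma>) x) y' = (1/2) * sqrt (ip \<sigma> x x + ip 0 y' y')"
    unfolding nrm1_def nrm_sq A ..
  also have "\<dots> \<le> sqrt 2 * (1 + \<sigma>) * ((1/2) * sqrt (ip \<sigma> x x + ip \<sigma> x' x'))"
    by (rule sqrt_alg[OF _ _ s0 C]) (simp_all only: nrm_sq[symmetric] zero_le_power2)
  also have "\<dots> = sqrt 2 * (1 + \<sigma>) * nrm1 \<sigma> x x'"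
    unfolding nrm1_def nrm_sq ..
  finally show ?thesis unfolding y'_def .
qed


lemma dist_nonneg:
  assumes "X \<noteq> {}" shows "0 \<le> dist_to \<sigma> x X"
  unfolding dist_to_def using assms by (intro cInf_greatest) (auto simp: nrm_nonneg)

lemma dimX_nonempty:
  assumes "L2_subspace_dim X m" shows "X \<noteq> {}"
  using assms unfolding L2_subspace_dim_def by blast

lemma dist_transfer:
  "dist_to \<sigma> x (D \<sigma> ` X) = dist_to 0 (D (- \<sigma>) x) X"
proof -
  have "nrm \<sigma> (\<lambda>t. x t - D \<sigma> z t) = nrm 0 (\<lambda>t. D (- \<sigma>) x t - z t)" for z
    unfolding nrm_def ip_def D_def
    by (rule arg_cong[where f=sqrt], rule Bochner_Integration.integral_cong[OF refl], rule nrm_alg)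
  then show ?thesis unfolding dist_to_def image_image by simp
qed

theorem lemma2p6:
  fixes X :: "nat \<Rightarrow> (real \<Rightarrow> real) set"
    and Q :: "nat \<Rightarrow> (real \<Rightarrow> real) \<Rightarrow> (real \<Rightarrow> real)"
    and L \<sigma> :: real
  assumes dimX: "\<And>m. m \<ge> 1 \<Longrightarrow> L2_subspace_dim (X m) m"
    and projQ: "\<And>m. m \<ge> 1 \<Longrightarrow> is_orth_proj 0 (Q m) (X m)"
    and approx: "\<And>m x x'. m \<ge> 1 \<Longrightarrow> has_weak_deriv x x' \<Longrightarrow>
                    dist_to 0 x (X m) \<le> L / real m * nrm1 0 x x'"
    and sigma_pos: "\<sigma> > 0"
  shows "(\<forall>m\<ge>1. is_orth_proj \<sigma> (\<lambda>x. D \<sigma> (Q m (D (-\<sigma>) x))) (D \<sigma> ` X m)) \<and>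
         (\<forall>m\<ge>1. \<forall>x x'. has_weak_deriv x x' \<longrightarrow>
            dist_to \<sigma> x (D \<sigma> ` X m) \<le> sqrt 2 * (1 + \<sigma>) * L / real m * nrm1 \<sigma> x x')"
proof (intro conjI allI impI)
  have s0: "0 \<le> \<sigma>" using sigma_pos by simp
  show "is_orth_proj \<sigma> (\<lambda>x. D \<sigma> (Q m (D (-\<sigma>) x))) (D \<sigma> ` X m)" if "m \<ge> 1" for m
    by (rule proj_part[OF projQ[OF that] s0])
  have L0: "0 \<le> L"
  proof -
    have wd1: "has_weak_deriv (\<lambda>_. 1::real) (\<lambda>_. 0)"
      unfolding has_weak_deriv_def L2_def by simp
    have d: "dist_to 0 (\<lambda>_. 1) (X 1) \<le> L / real 1 * nrm1 0 (\<lambda>_. 1) (\<lambda>_. 0)"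
      by (rule approx[OF _ wd1]) simp
    have n0: "nrm 0 (\<lambda>_. 0) = 0" unfolding nrm_def ip_def by simp
    have n1: "nrm 0 (\<lambda>_. 1) = 1" unfolding nrm_def ip_const1 by simp
    have e: "nrm1 0 (\<lambda>_. 1) (\<lambda>_. 0) = 1/2" unfolding nrm1_def n0 n1 by simp
    have "0 \<le> dist_to 0 (\<lambda>_. 1) (X 1)"
      by (rule dist_nonneg, rule dimX_nonempty, rule dimX) simp
    then have "0 \<le> L / real 1 * (1/2)" using d unfolding e by linarith
    then show ?thesis by simp
  qed
  fix m :: nat and x x' :: "real \<Rightarrow> real" assume m: "1 \<le> m" and wd: "has_weak_deriv x x'"
  have "dist_to \<sigma> x (D \<sigma> ` X m) = dist_to 0 (D (- \<sigma>) x) (X m)" by (rule dist_transfer)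
  also have "\<dots> \<le> L / real m * nrm1 0 (D (- \<sigma>) x) (\<lambda>s. exp (- \<sigma> * s) * (x' s - \<sigma> * x s))"
    by (rule approx[OF m wd_D[OF wd s0]])
  also have "\<dots> \<le> L / real m * (sqrt 2 * (1 + \<sigma>) * nrm1 \<sigma> x x')"
    by (rule mult_left_mono[OF norm_part[OF wd s0]]) (use L0 in simp)
  also have "\<dots> = sqrt 2 * (1 + \<sigma>) * L / real m * nrm1 \<sigma> x x'" by simp
  finally show "dist_to \<sigma> x (D \<sigma> ` X m) \<le> sqrt 2 * (1 + \<sigma>) * L / real m * nrm1 \<sigma> x x'" .
qed

end
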